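(* Let $X\subseteq\mathbb{Z}_6^2$ and suppose there are distinct $a,b,c\in\mathbb{Z}_6$ such that $X$ contains at least $3$ elements with first coordinate $a$, at least $3$ elements with first coordinate $b$, and at least $4$ elements with first coordinate $c$. Then there exists $S\subseteq X$ with $|S|=6$ and $\sum_{s\in S}s=(0,0)$. *)

theory Defs
  imports Main "HOL-Library.Numeral_Type" "HOL-Library.Product_Plus"
begin

end

theory Submission
  imports Defs
begin

lemma u6: "(UNIV::6 set) = {0,1,2,3,4,5}"
proof -
  have "card ({0,1,2,3,4,5}::6 set) = CARD(6)" by simp
  thus ?thesis by (metis card_subset_eq finite_class.finite_UNIV subset_UNIV)
qed

lemma ex6: "(x::6) = 0 \<or> x = 1 \<or> x = 2 \<or> x=3 \<or> x=4 \<or> x=5"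
  using u6 by auto

lemma shapes: fixes d e :: 6 assumes "d \<noteq> 0" "e \<noteq> 0" "d \<noteq> e"
  shows "2*d+2*e=0 \<or> 3*d+e=0 \<or> d+3*e=0 \<or> 2*d+e=0 \<or> d+2*e=0 \<or> 3*d+2*e=0 \<or> 2*d+3*e=0"
  using ex6[of d] ex6[of e] assms
  by (elim disjE) simp_all

lemma two6: "2*x = 2*(y::6) \<Longrightarrow> x = y \<or> x = y + 3"
  using ex6[of x] ex6[of y]
  by (elim disjE) simp_all

lemma lin2: assumes "(w2::6)+w3=w1+w4" "w3+w4=w1+w2" shows "2*w2 = 2*w4"
proof -
  have "(w2+w3) - (w3+w4) = (w1+w4) - (w1+w2)" using assms by simp
  hence "w2 - w4 = w4 - w2" by (simp add: algebra_simps)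
  hence "w2 - w4 + (w2 - w4) = 0" by (metis add.right_inverse minus_diff_eq)
  thus ?thesis by (simp add: algebra_simps mult_2)
qed

lemma finite6: "finite (A :: 'a::finite set)" by simp

lemma cardle: "A \<subseteq> (B::'a::finite set) \<Longrightarrow> card A = n \<Longrightarrow> n \<le> card B"
  using card_mono[of B A] by simp

definition sums :: "(6 \<times> 6) set \<Rightarrow> nat \<Rightarrow> 6 set" where
  "sums K n = {(\<Sum>s\<in>T. snd s) | T. T \<subseteq> K \<and> card T = n}"

lemma pigeon: fixes P Q :: "6 set" assumes "card P + card Q > 6"
  shows "\<exists>p\<in>P. \<exists>q\<in>Q. p + q = t"
proof (rule ccontr)
  assume "\<not> ?thesis"
  hence disj: "P \<inter> (\<lambda>q. t - q) ` Q = {}" by (auto, metis diff_add_cancel)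
  have ci: "card ((\<lambda>q. t-q)`Q) = card Q" by (rule card_image) (auto simp: inj_on_def)
  have "card (P \<union> (\<lambda>q. t-q)`Q) = card P + card Q"
    using card_Un_disjoint[OF _ _ disj] ci by simp
  moreover have "card (P \<union> (\<lambda>q. t-q)`Q) \<le> CARD(6)" by (rule card_mono) auto
  ultimately show False using assms by simp
qed

lemma colsum: fixes X :: "(6\<times>6) set"
  assumes "T \<subseteq> {x\<in>X. fst x = a}"
  shows "(\<Sum>s\<in>T. s) = (of_nat (card T) * a, \<Sum>s\<in>T. snd s)"
proof (rule prod_eqI)
  have "(\<Sum>s\<in>T. fst s) = (\<Sum>s\<in>T. a)" using assms by (intro sum.cong) auto
  thus "fst (\<Sum>s\<in>T. s) = fst (of_nat (card T) * a, \<Sum>s\<in>T. snd s)"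
    by (simp add: fst_sum)
qed (simp add: snd_sum)

lemma combine:
  fixes X :: "(6\<times>6) set"
  assumes "a\<noteq>b" "a\<noteq>c" "b\<noteq>c" "s1 \<in> sums {x\<in>X. fst x = a} i"
    "s2 \<in> sums {x\<in>X. fst x = b} j" "s3 \<in> sums {x\<in>X. fst x = c} k" "i+j+k=6"
    "of_nat i*a+of_nat j*b+of_nat k*c=0" "s1+s2+s3=0"
  shows "\<exists>S\<subseteq>X. card S = 6 \<and> (\<Sum>s\<in>S. s) = (0,0)"
proof -
  obtain T1 where T1: "T1 \<subseteq> {x\<in>X. fst x = a}" "card T1 = i" "s1 = (\<Sum>s\<in>T1. snd s)"
    using assms(4) unfolding sums_def by blast
  obtain T2 where T2: "T2 \<subseteq> {x\<in>X. fst x = b}" "card T2 = j" "s2 = (\<Sum>s\<in>T2. snd s)"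
    using assms(5) unfolding sums_def by blast
  obtain T3 where T3: "T3 \<subseteq> {x\<in>X. fst x = c}" "card T3 = k" "s3 = (\<Sum>s\<in>T3. snd s)"
    using assms(6) unfolding sums_def by blast
  have d12: "T1 \<inter> T2 = {}" using T1(1) T2(1) assms(1) by blast
  have d: "(T1 \<union> T2) \<inter> T3 = {}" using T1(1) T2(1) T3(1) assms(2,3) by blast
  have "card (T1 \<union> T2 \<union> T3) = card T1 + card T2 + card T3"
    using card_Un_disjoint[OF finite6 finite6 d] card_Un_disjoint[OF finite6 finite6 d12] by presburger
  hence c6: "card (T1 \<union> T2 \<union> T3) = 6" using T1(2) T2(2) T3(2) assms(7) by presburger
  have s: "(\<Sum>s\<in>T1 \<union> T2 \<union> T3. s) = (\<Sum>s\<in>T1. s) + (\<Sum>s\<in>T2. s) + (\<Sum>s\<in>T3. s)"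
    by (simp only: sum.union_disjoint[OF finite6 finite6 d] sum.union_disjoint[OF finite6 finite6 d12])
  have "(\<Sum>s\<in>T1. s) + (\<Sum>s\<in>T2. s) + (\<Sum>s\<in>T3. s) = (of_nat i*a+of_nat j*b+of_nat k*c, s1+s2+s3)"
    unfolding colsum[OF T1(1)] colsum[OF T2(1)] colsum[OF T3(1)] T1(2,3) T2(2,3) T3(2,3) by simp
  hence "(\<Sum>s\<in>T1 \<union> T2 \<union> T3. s) = (0,0)" using s assms(8,9) by simp
  moreover have "T1 \<union> T2 \<union> T3 \<subseteq> X" using T1(1) T2(1) T3(1) by blast
  ultimately show ?thesis using c6 by blast
qed

lemma col3: fixes X :: "(6\<times>6) set"
  assumes "card {x\<in>X. fst x = a} \<ge> 3"
  obtains y1 y2 y3 where "(a,y1)\<in>X" "(a,y2)\<in>X" "(a,y3)\<in>X" "distinct [y1,y2,y3]"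
proof -
  obtain T where T: "T \<subseteq> {x\<in>X. fst x = a}" "card T = 3"
    using obtain_subset_with_card_n[OF assms] by blast
  then obtain x y z where xyz: "T = {x,y,z}" "x\<noteq>y" "y\<noteq>z" "x\<noteq>z" by (auto simp: card_3_iff)
  have e: "x = (a, snd x)" "y = (a, snd y)" "z = (a, snd z)" using T xyz by (auto intro: prod_eqI)
  hence "snd x \<noteq> snd y" "snd y \<noteq> snd z" "snd x \<noteq> snd z" using xyz by metis+
  moreover have "(a, snd x) \<in> X" "(a, snd y) \<in> X" "(a, snd z) \<in> X"
    using e T xyz by (metis (no_types, lifting) insert_subset mem_Collect_eq)+
  ultimately show ?thesis using that[of "snd x" "snd y" "snd z"] by auto
qed

lemma col4: fixes X :: "(6\<times>6) set"
  assumes "card {x\<in>X. fst x = a} \<ge> 4"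
  obtains y1 y2 y3 y4 where "(a,y1)\<in>X" "(a,y2)\<in>X" "(a,y3)\<in>X" "(a,y4)\<in>X" "distinct [y1,y2,y3,y4]"
proof -
  obtain T where T: "T \<subseteq> {x\<in>X. fst x = a}" "card T = 4"
    using obtain_subset_with_card_n[OF assms] by blast
  then obtain w T' where wT: "T = insert w T'" "w \<notin> T'" "card T' = 3"
    using card_eq_SucD[of T 3] by auto
  then obtain x y z where xyz: "T' = {x,y,z}" "x\<noteq>y" "y\<noteq>z" "x\<noteq>z" using wT(3) unfolding card_3_iff by blast
  have e: "x = (a, snd x)" "y = (a, snd y)" "z = (a, snd z)" "w = (a, snd w)"
    using T xyz wT by (auto intro: prod_eqI)
  hence "snd x \<noteq> snd y" "snd y \<noteq> snd z" "snd x \<noteq> snd z" "snd w \<noteq> snd x"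
     "snd w \<noteq> snd y" "snd w \<noteq> snd z" using xyz wT by (metis insertCI)+
  moreover have "(a, snd x) \<in> X" "(a, snd y) \<in> X" "(a, snd z) \<in> X" "(a, snd w) \<in> X"
    using e T xyz wT by (metis (no_types, lifting) insert_subset mem_Collect_eq)+
  ultimately show ?thesis using that[of "snd w" "snd x" "snd y" "snd z"] by auto
qed


lemma memI: assumes "T \<subseteq> K" "card T = n" "(\<Sum>s\<in>T. snd s) = v"
  shows "v \<in> sums K n"
  unfolding sums_def using assms by (intro CollectI exI[of _ T]) simp

lemma mem2: fixes X :: "(6\<times>6) set"
  assumes "(a,y) \<in> X" "(a,y') \<in> X" "y \<noteq> y'"
  shows "y + y' \<in> sums {x\<in>X. fst x = a} 2"
proof -
  have "{(a,y),(a,y')} \<subseteq> {x\<in>X. fst x = a}" using assms(1,2) by simp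
  moreover have "card {(a,y),(a,y')} = 2" using assms(3) by simp
  moreover have "(\<Sum>s\<in>{(a,y),(a,y')}. snd s) = y + y'" using assms(3) by simp
  ultimately show ?thesis by (rule memI)
qed

lemma mem3: fixes X :: "(6\<times>6) set"
  assumes "(a,y) \<in> X" "(a,y') \<in> X" "(a,y'') \<in> X" "distinct [y,y',y'']"
  shows "y + y' + y'' \<in> sums {x\<in>X. fst x = a} 3"
proof -
  have "{(a,y),(a,y'),(a,y'')} \<subseteq> {x\<in>X. fst x = a}" using assms(1-3) by simp
  moreover have "card {(a,y),(a,y'),(a,y'')} = 3" using assms(4) by simp
  moreover have "(\<Sum>s\<in>{(a,y),(a,y'),(a,y'')}. snd s) = y + y' + y''" using assms(4) by (simp add: add.assoc)
  ultimately show ?thesis by (rule memI)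
qed

lemma mem1: fixes X :: "(6\<times>6) set"
  assumes "(a,y) \<in> X"
  shows "y \<in> sums {x\<in>X. fst x = a} 1"
proof -
  have "{(a,y)} \<subseteq> {x\<in>X. fst x = a}" using assms(1) by simp
  moreover have "card {(a,y)} = 1" by simp
  moreover have "(\<Sum>s\<in>{(a,y)}. snd s) = y" by simp
  ultimately show ?thesis by (rule memI)
qed

lemma sumsA: fixes X :: "(6\<times>6) set"
  assumes X: "(a,y1)\<in>X" "(a,y2)\<in>X" "(a,y3)\<in>X" and dd: "distinct [y1,y2,y3]" "i \<in> {1,2}"
  shows "card (sums {x\<in>X. fst x = a} i) \<ge> 3"
proof (cases "i = 1")
  case True
  have "y1 \<in> sums {x\<in>X. fst x = a} 1" "y2 \<in> sums {x\<in>X. fst x = a} 1" "y3 \<in> sums {x\<in>X. fst x = a} 1"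
    using mem1[OF X(1)] mem1[OF X(2)] mem1[OF X(3)] .
  hence "{y1,y2,y3} \<subseteq> sums {x\<in>X. fst x = a} i" using True by simp
  moreover have "card {y1,y2,y3} = 3" using dd(1) by simp
  ultimately show ?thesis by (rule cardle)
next
  case False
  hence i: "i = 2" using dd(2) by simp
  have ne: "y1 \<noteq> y2" "y1 \<noteq> y3" "y2 \<noteq> y3" using dd(1) by simp_all
  have "y1+y2 \<in> sums {x\<in>X. fst x = a} 2" "y1+y3 \<in> sums {x\<in>X. fst x = a} 2" "y2+y3 \<in> sums {x\<in>X. fst x = a} 2"
    using mem2[OF X(1,2) ne(1)] mem2[OF X(1,3) ne(2)] mem2[OF X(2,3) ne(3)] .
  hence sub: "{y1+y2,y1+y3,y2+y3} \<subseteq> sums {x\<in>X. fst x = a} i" using i by simp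
  have "y1+y2 \<noteq> y1+y3" "y1+y2 \<noteq> y2+y3" "y1+y3 \<noteq> y2+y3"
    using ne by (simp_all add: add.commute)
  hence "card {y1+y2,y1+y3,y2+y3} = 3" by simp
  from sub this show ?thesis by (rule cardle)
qed

lemma sumsC: fixes X :: "(6\<times>6) set"
  assumes X: "(a,w1)\<in>X" "(a,w2)\<in>X" "(a,w3)\<in>X" "(a,w4)\<in>X" and dd: "distinct [w1,w2,w3,w4]" "k \<in> {1,2,3}"
  shows "card (sums {x\<in>X. fst x = a} k) \<ge> 4"
proof -
  consider "k = 1" | "k = 2" | "k = 3" using dd(2) by auto
  then show ?thesis
  proof cases
    case 1
    have "{w1,w2,w3,w4} \<subseteq> sums {x\<in>X. fst x = a} k" using mem1 X 1 by auto
    moreover have "card {w1,w2,w3,w4} = 4" using dd(1) by auto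
    ultimately show ?thesis by (rule cardle)
  next
    case 3
    define \<sigma> where "\<sigma> = w1+w2+w3+w4"
    have "\<sigma> - w4 = w1+w2+w3" "\<sigma> - w3 = w1+w2+w4" "\<sigma> - w2 = w1+w3+w4" "\<sigma> - w1 = w2+w3+w4"
      unfolding \<sigma>_def by (simp_all add: algebra_simps)
    hence "{\<sigma>-w1,\<sigma>-w2,\<sigma>-w3,\<sigma>-w4} \<subseteq> sums {x\<in>X. fst x = a} k"
      using mem3 X dd(1) 3 by (auto simp del: diff_add_cancel)
    moreover have "card {\<sigma>-w1,\<sigma>-w2,\<sigma>-w3,\<sigma>-w4} = 4" using dd(1) by auto
    ultimately show ?thesis by (rule cardle)
  next
    case 2
    have ne: "w1 \<noteq> w2" "w1 \<noteq> w3" "w1 \<noteq> w4" "w2 \<noteq> w3" "w2 \<noteq> w4" "w3 \<noteq> w4" using dd(1) by auto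
    have "\<exists>v \<in> {w2+w3,w2+w4,w3+w4}. v \<notin> {w1+w2,w1+w3,w1+w4}"
    proof (rule ccontr)
      assume "\<not> ?thesis"
      hence h: "w2+w3 \<in> {w1+w2,w1+w3,w1+w4}" "w2+w4 \<in> {w1+w2,w1+w3,w1+w4}" "w3+w4 \<in> {w1+w2,w1+w3,w1+w4}" by auto
      have e1: "w2+w3 = w1+w4" using h(1) ne by (auto simp: add.commute)
      have e2: "w2+w4 = w1+w3" using h(2) ne by (auto simp: add.commute)
      have e3: "w3+w4 = w1+w2" using h(3) ne by (auto simp: add.commute)
      have "2*w2 = 2*w4" using lin2[OF e1 e3] .
      moreover have "2*w2 = 2*w3" using lin2[of w2 w4 w1 w3] e2 e3 by (simp add: add.commute)
      ultimately show False using two6[of w2 w4] two6[of w2 w3] ne by auto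
    qed
    then obtain v where v: "v \<in> {w2+w3,w2+w4,w3+w4}" "v \<notin> {w1+w2,w1+w3,w1+w4}" by blast
    have "{w2+w3,w2+w4,w3+w4,w1+w2,w1+w3,w1+w4} \<subseteq> sums {x\<in>X. fst x = a} k"
      using mem2 X ne 2 by auto
    hence "insert v {w1+w2,w1+w3,w1+w4} \<subseteq> sums {x\<in>X. fst x = a} k" using v(1) by auto
    moreover have "card (insert v {w1+w2,w1+w3,w1+w4}) = 4" using v(2) ne by auto
    ultimately show ?thesis by (rule cardle)
  qed
qed

lemma nonempty: "j \<le> card K \<Longrightarrow> sums K j \<noteq> {}"
  unfolding sums_def using obtain_subset_with_card_n[of j K] by blast

lemma shapeAC: fixes X :: "(6\<times>6) set"
  assumes "a\<noteq>b" "a\<noteq>c" "b\<noteq>c" "card {x\<in>X. fst x = a} \<ge> 3"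
    "card {x\<in>X. fst x = b} \<ge> 3" "card {x\<in>X. fst x = c} \<ge> 4"
    "i \<in> {1,2}" "j \<le> 3" "k \<in> {1,2,3}" "i+j+k=6" "of_nat i*a+of_nat j*b+of_nat k*c=0"
  shows "\<exists>S\<subseteq>X. card S = 6 \<and> (\<Sum>s\<in>S. s) = (0,0)"
proof -
  obtain y1 y2 y3 where y: "(a,y1)\<in>X" "(a,y2)\<in>X" "(a,y3)\<in>X" "distinct [y1,y2,y3]"
    using col3[OF assms(4)] by blast
  obtain w1 w2 w3 w4 where w: "(c,w1)\<in>X" "(c,w2)\<in>X" "(c,w3)\<in>X" "(c,w4)\<in>X" "distinct [w1,w2,w3,w4]"
    using col4[OF assms(6)] by blast
  have A: "card (sums {x\<in>X. fst x = a} i) \<ge> 3" using sumsA[OF y assms(7)] .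
  have C: "card (sums {x\<in>X. fst x = c} k) \<ge> 4" using sumsC[OF w assms(9)] .
  obtain s2 where s2: "s2 \<in> sums {x\<in>X. fst x = b} j" using nonempty[of j] assms(5,8)
    by (metis all_not_in_conv le_trans)
  obtain s1 s3 where s: "s1 \<in> sums {x\<in>X. fst x = a} i" "s3 \<in> sums {x\<in>X. fst x = c} k" "s1 + s3 = - s2"
    using pigeon[of "sums {x\<in>X. fst x = a} i" "sums {x\<in>X. fst x = c} k" "-s2"] A C by auto
  have "s1 + s2 + s3 = 0" using s(3) by (metis add.commute add.left_commute add.right_inverse)
  thus ?thesis using combine[OF assms(1-3) s(1) s2 s(2) assms(10,11)] by blast
qed

lemma shape: fixes X :: "(6\<times>6) set"
  assumes "a\<noteq>b" "a\<noteq>c" "b\<noteq>c" "card {x\<in>X. fst x = a} \<ge> 3"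
    "card {x\<in>X. fst x = b} \<ge> 3" "card {x\<in>X. fst x = c} \<ge> 4"
    "(i \<in> {1,2} \<and> j \<le> 3) \<or> (j \<in> {1,2} \<and> i \<le> 3)" "k \<in> {1,2,3}" "i+j+k=6"
    "of_nat i*a+of_nat j*b+of_nat k*c=0"
  shows "\<exists>S\<subseteq>X. card S = 6 \<and> (\<Sum>s\<in>S. s) = (0,0)"
  using assms(7)
proof
  assume "i \<in> {1,2} \<and> j \<le> 3"
  thus ?thesis using shapeAC[OF assms(1-6) _ _ assms(8,9,10)] by blast
next
  assume h: "j \<in> {1,2} \<and> i \<le> 3"
  have "j + i + k = 6" "of_nat j*b+of_nat i*a+of_nat k*c=0" using assms(9,10) by (simp_all add: add.commute)
  thus ?thesis using shapeAC[of b a c X j i k] h assms(1-6,8) by auto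
qed

lemma eqn: assumes "i+j+k=6"
  shows "of_nat i*(d+c)+of_nat j*(e+c)+of_nat k*(c::6) = of_nat i*d+of_nat j*e"
proof -
  have "of_nat i*(d+c)+of_nat j*(e+c)+of_nat k*c = of_nat i*d+of_nat j*e + of_nat (i+j+k)*c"
    by (simp add: algebra_simps)
  moreover have six: "(6::6) = 0" by simp
  ultimately show ?thesis using assms by simp
qed

theorem mainTheorem13:
  fixes X :: "(6 \<times> 6) set" and a b c :: 6
  assumes "a \<noteq> b" "a \<noteq> c" "b \<noteq> c"
    and "card {x \<in> X. fst x = a} \<ge> 3"
    and "card {x \<in> X. fst x = b} \<ge> 3"
    and "card {x \<in> X. fst x = c} \<ge> 4"
  shows "\<exists>S \<subseteq> X. card S = 6 \<and> (\<Sum>s\<in>S. s) = (0, 0)"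
proof -
  define d where "d = a - c"
  define e where "e = b - c"
  have ad: "a = d + c" and be: "b = e + c" unfolding d_def e_def by simp_all
  have "d \<noteq> 0" "e \<noteq> 0" "d \<noteq> e" using assms(1-3) unfolding d_def e_def by auto
  note sh = shapes[OF this]
  have E: "\<And>i j k. i+j+k=6 \<Longrightarrow> of_nat i*a+of_nat j*b+of_nat k*c = of_nat i*d+of_nat j*e"
    unfolding ad be by (rule eqn)
  note S = shape[OF assms]
  from sh show ?thesis
  proof (elim disjE)
    assume "2*d+2*e=0" thus ?thesis using S[of 2 2 2] E[of 2 2 2] by simp
  next
    assume "3*d+e=0" thus ?thesis using S[of 3 1 2] E[of 3 1 2] by simp
  next
    assume "d+3*e=0" thus ?thesis using S[of 1 3 2] E[of 1 3 2] by simp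
  next
    assume "2*d+e=0" thus ?thesis using S[of 2 1 3] E[of 2 1 3] by simp
  next
    assume "d+2*e=0" thus ?thesis using S[of 1 2 3] E[of 1 2 3] by simp
  next
    assume "3*d+2*e=0" thus ?thesis using S[of 3 2 1] E[of 3 2 1] by simp
  next
    assume "2*d+3*e=0" thus ?thesis using S[of 2 3 1] E[of 2 3 1] by simp
  qed
qed

end
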